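(* Let $G$ be a graph, $r\ge1$, $k\in\mathbb{N}$, and let $L_S$ be a subordering of $S\subseteq V(G)$ with free vertices $T=V(G)\setminus S$. Assume there is a full right extension $L'$ of $L_S$ with $\mathrm{wcol}_r(G,L')\le k$. If $u\in T$ satisfies $|\mathrm{Wreach}_r(G,L_S,u)|=k$, then there is a full right extension $\overline{L}$ of $L_S$ in which $u$ is the leftmost vertex of $T$ and $\mathrm{wcol}_r(G,\overline{L})\le k$.
   Context: All graphs are finite, undirected, without loops. A path has length equal to its number of vertices minus one. A subordering $L_S$ is a linear ordering of $S\subseteq V(G)$; $\preceq_{L_S}$ means precedes or equal. For a subordering $L_S$ and $u,v\in V(G)$, $u\in\mathrm{Wreach}_r(G,L_S,v)$ iff either $u=v$, or $u\in S$ and there is a path $P$ of length at most $r$ between $u$ and $v$ with $u\preceq_{L_S} w$ for all $w\in V(P)\cap S$; $\mathrm{wcol}_r(G,L_S)=\max_{v}|\mathrm{Wreach}_r(G,L_S,v)|$. A full right extension of $L_S$ is a linear ordering of $V(G)$ whose restriction to $S$ is $L_S$ and in which every vertex of $S$ precedes every vertex of $V(G)\setminus S$. *)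

theory Defs
  imports Main
begin

definition graph :: "'a set \<Rightarrow> ('a \<Rightarrow> 'a \<Rightarrow> bool) \<Rightarrow> bool" where
  "graph V E \<longleftrightarrow> finite V \<and> (\<forall>x y. E x y \<longrightarrow> x \<in> V \<and> y \<in> V) \<and>
     (\<forall>x y. E x y \<longrightarrow> E y x) \<and> (\<forall>x. \<not> E x x)"

text \<open>A path given as its list of vertices (nonempty, distinct, consecutive vertices adjacent).
  Its length is the number of vertices minus one.\<close>
definition is_path :: "'a set \<Rightarrow> ('a \<Rightarrow> 'a \<Rightarrow> bool) \<Rightarrow> 'a list \<Rightarrow> bool" where
  "is_path V E P \<longleftrightarrow> P \<noteq> [] \<and> distinct P \<and> set P \<subseteq> V \<and>
     (\<forall>i. Suc i < length P \<longrightarrow> E (P ! i) (P ! Suc i))"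

text \<open>A (sub)ordering L_S of S is a distinct list with set L_S = S; position gives the order.\<close>
definition subordering :: "'a set \<Rightarrow> 'a list \<Rightarrow> bool" where
  "subordering V L \<longleftrightarrow> distinct L \<and> set L \<subseteq> V"

definition prec_eq :: "'a list \<Rightarrow> 'a \<Rightarrow> 'a \<Rightarrow> bool" where
  "prec_eq L u w \<longleftrightarrow> (\<exists>i j. i \<le> j \<and> j < length L \<and> L ! i = u \<and> L ! j = w)"

definition Wreach :: "'a set \<Rightarrow> ('a \<Rightarrow> 'a \<Rightarrow> bool) \<Rightarrow> nat \<Rightarrow> 'a list \<Rightarrow> 'a \<Rightarrow> 'a set" where
  "Wreach V E r L v = {u \<in> V. u = v \<or>
     (u \<in> set L \<and> (\<exists>P. is_path V E P \<and> hd P = u \<and> last P = v \<and> length P - 1 \<le> r \<and>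
        (\<forall>w \<in> set P \<inter> set L. prec_eq L u w)))}"

definition wcol :: "'a set \<Rightarrow> ('a \<Rightarrow> 'a \<Rightarrow> bool) \<Rightarrow> nat \<Rightarrow> 'a list \<Rightarrow> nat" where
  "wcol V E r L = Max ((\<lambda>v. card (Wreach V E r L v)) ` V)"

text \<open>Full right extension: a linear ordering of all of V that starts with L_S
  (so its restriction to S is L_S and S precedes V - S).\<close>
definition full_right_ext :: "'a set \<Rightarrow> 'a list \<Rightarrow> 'a list \<Rightarrow> bool" where
  "full_right_ext V LS L \<longleftrightarrow> distinct L \<and> set L = V \<and> take (length LS) L = LS"

end

theory Submission
  imports Defs
begin

lemma pe_set: "prec_eq L a b \<Longrightarrow> a \<in> set L \<and> b \<in> set L"
  unfolding prec_eq_def by auto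

lemma pe_cons: "b \<in> set (a # ys) \<Longrightarrow> prec_eq (a # ys) a b"
proof -
  assume "b \<in> set (a # ys)"
  then obtain j where j: "j < length (a#ys)" "(a#ys) ! j = b" using in_set_conv_nth by metis
  then show ?thesis unfolding prec_eq_def by (intro exI[of _ 0] exI[of _ j]) auto
qed

lemma pe_app1: "prec_eq xs a b \<Longrightarrow> prec_eq (xs @ ys) a b"
proof -
  assume "prec_eq xs a b"
  then obtain i j where "i \<le> j" "j < length xs" "xs ! i = a" "xs ! j = b" unfolding prec_eq_def by auto
  then show ?thesis unfolding prec_eq_def
    by (intro exI[of _ "i"] exI[of _ "j"]) (auto simp: nth_append)
qed

lemma pe_app2: "prec_eq ys a b \<Longrightarrow> prec_eq (xs @ ys) a b"
proof -
  assume "prec_eq ys a b"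
  then obtain i j where "i \<le> j" "j < length ys" "ys ! i = a" "ys ! j = b" unfolding prec_eq_def by auto
  then show ?thesis unfolding prec_eq_def
    by (intro exI[of _ "length xs + i"] exI[of _ "length xs + j"]) (auto simp: nth_append)
qed

lemma pe_app3: "a \<in> set xs \<Longrightarrow> b \<in> set ys \<Longrightarrow> prec_eq (xs @ ys) a b"
proof -
  assume "a \<in> set xs" "b \<in> set ys"
  then obtain i j where "i < length xs" "xs ! i = a" "j < length ys" "ys ! j = b"
    by (auto simp: in_set_conv_nth)
  then show ?thesis unfolding prec_eq_def
    by (intro exI[of _ "i"] exI[of _ "length xs + j"]) (auto simp: nth_append)
qed

lemma pe_app4: "distinct (xs @ ys) \<Longrightarrow> prec_eq (xs @ ys) a b \<Longrightarrow> a \<in> set ys \<Longrightarrow> prec_eq ys a b"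
proof -
  assume d: "distinct (xs @ ys)" and p: "prec_eq (xs @ ys) a b" and a: "a \<in> set ys"
  obtain i j where ij: "i \<le> j" "j < length (xs@ys)" "(xs@ys) ! i = a" "(xs@ys) ! j = b" using p unfolding prec_eq_def by auto
  have "length xs \<le> i"
  proof (rule ccontr)
    assume "\<not> length xs \<le> i"
    then have "a \<in> set xs" using ij by (auto simp: nth_append)
    then show False using a d by auto
  qed
  then have "ys ! (i - length xs) = a" "ys ! (j - length xs) = b" "i - length xs \<le> j - length xs"
     "j - length xs < length ys"
    using ij by (auto simp: nth_append)
  then show ?thesis unfolding prec_eq_def by blast
qed

lemma pe_app5: "distinct (xs @ ys) \<Longrightarrow> prec_eq (xs @ ys) a b \<Longrightarrow> b \<in> set xs \<Longrightarrow> prec_eq xs a b"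
proof -
  assume d: "distinct (xs @ ys)" and p: "prec_eq (xs @ ys) a b" and b: "b \<in> set xs"
  obtain i j where ij: "i \<le> j" "j < length (xs@ys)" "(xs@ys) ! i = a" "(xs@ys) ! j = b" using p unfolding prec_eq_def by auto
  have "j < length xs"
  proof (rule ccontr)
    assume "\<not> j < length xs"
    then have "b \<in> set ys" using ij by (auto simp: nth_append)
    then show False using b d by auto
  qed
  then have "xs ! i = a" "xs ! j = b" using ij by (auto simp: nth_append)
  then show ?thesis using ij \<open>j < length xs\<close> unfolding prec_eq_def by blast
qed

lemma pe_min: "S \<subseteq> set R \<Longrightarrow> S \<noteq> {} \<Longrightarrow> \<exists>x\<in>S. \<forall>y\<in>S. prec_eq R x y"
proof (induction R)
  case Nil then show ?case by auto
next
  case (Cons a R)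
  show ?case
  proof (cases "a \<in> S")
    case True
    then show ?thesis using Cons.prems by (intro bexI[of _ a]) (auto intro!: pe_cons)
  next
    case False
    then have "S \<subseteq> set R" using Cons.prems by auto
    then obtain x where "x \<in> S" "\<forall>y\<in>S. prec_eq R x y" using Cons by auto
    then show ?thesis using pe_app2[of R _ _ "[a]"] by auto
  qed
qed

lemma path_take: "is_path V E P \<Longrightarrow> i < length P \<Longrightarrow> is_path V E (take (Suc i) P)"
  unfolding is_path_def by (auto dest: in_set_takeD)

lemma path_rev: "is_path V E P \<Longrightarrow> (\<forall>x y. E x y \<longrightarrow> E y x) \<Longrightarrow> is_path V E (rev P)"
  unfolding is_path_def
proof (intro conjI allI impI)
  fix i assume a: "P \<noteq> [] \<and> distinct P \<and> set P \<subseteq> V \<and> (\<forall>i. Suc i < length P \<longrightarrow> E (P ! i) (P ! Suc i))"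
    "\<forall>x y. E x y \<longrightarrow> E y x" "Suc i < length (rev P)"
  have "E (P ! (length P - Suc (Suc i))) (P ! Suc (length P - Suc (Suc i)))"
    using a by auto
  moreover have "Suc (length P - Suc (Suc i)) = length P - Suc i" using a by auto
  ultimately show "E (rev P ! i) (rev P ! Suc i)" using a by (auto simp: rev_nth)
qed auto

theorem proposition8:
  fixes V :: "'a set" and E :: "'a \<Rightarrow> 'a \<Rightarrow> bool" and r k :: nat
    and LS L' :: "'a list" and u :: 'a
  assumes "graph V E"
    and "r \<ge> 1"
    and "subordering V LS"
    and "full_right_ext V LS L'" and "wcol V E r L' \<le> k"
    and "u \<in> V - set LS"
    and "card (Wreach V E r LS u) = k"
  shows "\<exists>Lbar. full_right_ext V LS Lbar \<and> Lbar ! length LS = u \<and> wcol V E r Lbar \<le> k"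
proof -
  have fin: "finite V" and sym: "\<forall>x y. E x y \<longrightarrow> E y x" using assms(1) unfolding graph_def by auto
  define R where "R = drop (length LS) L'"
  have L': "L' = LS @ R" using assms(4) unfolding full_right_ext_def R_def by (metis append_take_drop_id)
  have dL': "distinct (LS @ R)" and sL': "set (LS @ R) = V" using assms(4) L' unfolding full_right_ext_def by auto
  have uR: "u \<in> set R" using assms(6) sL' by auto
  obtain R1 R2 where R: "R = R1 @ u # R2" using split_list[OF uR] by auto
  define Lb where "Lb = LS @ u # R1 @ R2"
  have dLb: "distinct Lb" using dL' R unfolding Lb_def by auto
  have sLb: "set Lb = V" using sL' R unfolding Lb_def by auto
  have fLb: "full_right_ext V LS Lb" using dLb sLb unfolding full_right_ext_def Lb_def by auto
  have nLb: "Lb ! length LS = u" unfolding Lb_def by simp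
  have wfin: "\<And>L v. finite (Wreach V E r L v)" using fin unfolding Wreach_def by auto
  have cle: "\<And>v. v \<in> V \<Longrightarrow> card (Wreach V E r L' v) \<le> k"
  proof -
    fix v assume "v \<in> V"
    then have "card (Wreach V E r L' v) \<le> wcol V E r L'" unfolding wcol_def using fin by auto
    then show "card (Wreach V E r L' v) \<le> k" using assms(5) by auto
  qed
  have sub1: "Wreach V E r LS u \<subseteq> Wreach V E r L' u"
  proof
    fix w assume "w \<in> Wreach V E r LS u"
    then have w: "w \<in> V" "w = u \<or> (w \<in> set LS \<and> (\<exists>P. is_path V E P \<and> hd P = w \<and> last P = u \<and> length P - 1 \<le> r \<and>
        (\<forall>y \<in> set P \<inter> set LS. prec_eq LS w y)))" unfolding Wreach_def by auto
    show "w \<in> Wreach V E r L' u"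
    proof (cases "w = u")
      case True then show ?thesis using w unfolding Wreach_def by auto
    next
      case False
      then obtain P where P: "w \<in> set LS" "is_path V E P" "hd P = w" "last P = u" "length P - 1 \<le> r"
        "\<forall>y \<in> set P \<inter> set LS. prec_eq LS w y" using w by auto
      have "\<forall>y \<in> set P \<inter> set L'. prec_eq L' w y"
      proof
        fix y assume y: "y \<in> set P \<inter> set L'"
        show "prec_eq L' w y"
        proof (cases "y \<in> set LS")
          case True
          then have "prec_eq LS w y" using P(6) y by auto
          then show ?thesis using L' pe_app1 by auto
        next
          case False then have "y \<in> set R" using y L' by auto
          then show ?thesis using P L' pe_app3 by auto
        qed
      qed
      then show ?thesis using P w L' unfolding Wreach_def by auto
    qed
  qed
  have eq1: "Wreach V E r LS u = Wreach V E r L' u"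
    using card_subset_eq[OF wfin sub1] cle[of u] assms(6,7) card_mono[OF wfin sub1] by auto
  have sub2: "Wreach V E r Lb v \<subseteq> Wreach V E r L' v" for v
  proof
    fix w assume "w \<in> Wreach V E r Lb v"
    then have w: "w \<in> V" "w = v \<or> (w \<in> set Lb \<and> (\<exists>P. is_path V E P \<and> hd P = w \<and> last P = v \<and> length P - 1 \<le> r \<and>
        (\<forall>y \<in> set P \<inter> set Lb. prec_eq Lb w y)))" unfolding Wreach_def by auto
    show "w \<in> Wreach V E r L' v"
    proof (cases "w = v")
      case True then show ?thesis using w unfolding Wreach_def by auto
    next
      case False
      then obtain P where P: "is_path V E P" "hd P = w" "last P = v" "length P - 1 \<le> r"
        "\<forall>y \<in> set P. prec_eq Lb w y" using w sLb unfolding is_path_def by auto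
      have PV: "set P \<subseteq> V" using P(1) unfolding is_path_def by auto
      have goal: "\<forall>y \<in> set P. prec_eq L' w y"
      proof (cases "w \<in> set LS")
        case True
        show ?thesis
        proof
          fix y assume y: "y \<in> set P"
          show "prec_eq L' w y"
          proof (cases "y \<in> set LS")
            case True
            have "prec_eq LS w y" using pe_app5[of LS "u # R1 @ R2" w y] dLb P(5) y True unfolding Lb_def by auto
            then show ?thesis using L' pe_app1 by auto
          next
            case False then have "y \<in> set R" using y PV sL' by auto
            then show ?thesis using \<open>w \<in> set LS\<close> L' pe_app3 by auto
          qed
        qed
      next
        case wLS: False
        show ?thesis
        proof (cases "w = u")
          case True
          have PR: "set P \<subseteq> set R"
          proof
            fix y assume "y \<in> set P"
            then have "prec_eq (u # R1 @ R2) u y" using pe_app4[of LS "u # R1 @ R2" u y] dLb P(5) True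
              unfolding Lb_def by auto
            then show "y \<in> set R" using pe_set[of "u # R1 @ R2" u y] R by auto
          qed
          obtain x where x: "x \<in> set P" "\<forall>y\<in>set P. prec_eq R x y"
            using pe_min[OF PR] P(1) unfolding is_path_def by auto
          have "x = u"
          proof (rule ccontr)
            assume xu: "x \<noteq> u"
            obtain i where i: "i < length P" "P ! i = x" using x(1) by (auto simp: in_set_conv_nth)
            define Q where "Q = rev (take (Suc i) P)"
            have Q: "is_path V E Q" unfolding Q_def using path_rev[OF path_take[OF P(1) i(1)] sym] .
            have hQ: "hd Q = x" unfolding Q_def using i by (simp add: hd_rev take_Suc_conv_app_nth)
            have lQ: "last Q = u" unfolding Q_def using i P(2) True by (simp add: last_rev)
            have lenQ: "length Q - 1 \<le> r" unfolding Q_def using P(4) i by auto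
            have "\<forall>y\<in>set Q \<inter> set L'. prec_eq L' x y"
              using x(2) L' pe_app2[of R x _ LS] unfolding Q_def by (auto dest: in_set_takeD)
            moreover have "x \<in> V" "x \<in> set L'" using x(1) PV sL' L' by auto
            ultimately have "x \<in> Wreach V E r L' u" using Q hQ lQ lenQ unfolding Wreach_def by blast
            then have "x \<in> Wreach V E r LS u" using eq1 by simp
            then have "x \<in> set LS" using xu unfolding Wreach_def by auto
            moreover have "x \<in> set R" using x(1) PR by auto
            ultimately show False using dL' by auto
          qed
          then show ?thesis using x(2) True L' pe_app2[of R _ _ LS] by auto
        next
          case wu: False
          have wC: "w \<in> set (R1 @ R2)" using w(1) sL' wLS wu R by auto
          show ?thesis
          proof
            fix y assume y: "y \<in> set P"
            have "prec_eq (u # R1 @ R2) w y" using pe_app4[of LS "u # R1 @ R2" w y] dLb P(5) y wC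
              unfolding Lb_def by auto
            then have p2: "prec_eq (R1 @ R2) w y" using pe_app4[of "[u]" "R1 @ R2" w y] dLb wC
              unfolding Lb_def by auto
            have d12: "distinct (R1 @ R2)" using dLb unfolding Lb_def by auto
            have "prec_eq R w y"
            proof (cases "w \<in> set R2")
              case True
              then have "prec_eq R2 w y" using pe_app4[OF d12 p2] by auto
              then show ?thesis using R pe_app2[of R2 w y "[u]"] pe_app2[of "u # R2" w y R1] by auto
            next
              case False
              then have wR1: "w \<in> set R1" using wC by auto
              show ?thesis
              proof (cases "y \<in> set R1")
                case True
                then have "prec_eq R1 w y" using pe_app5[OF d12 p2] by auto
                then show ?thesis using R pe_app1 by auto
              next
                case False
                then have "y \<in> set (u # R2)" using pe_set[OF p2] by auto
                then show ?thesis using R pe_app3[of w R1 y "u # R2"] wR1 by auto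
              qed
            qed
            then show "prec_eq L' w y" using L' pe_app2 by auto
          qed
        qed
      qed
      have "w \<in> set L'" using w(1) sL' L' by auto
      then show ?thesis using goal P w(1) unfolding Wreach_def by auto
    qed
  qed
  have "wcol V E r Lb \<le> k"
    unfolding wcol_def
  proof (subst Max_le_iff)
    show "finite ((\<lambda>v. card (Wreach V E r Lb v)) ` V)" using fin by auto
    show "(\<lambda>v. card (Wreach V E r Lb v)) ` V \<noteq> {}" using assms(6) by auto
    show "\<forall>a\<in>(\<lambda>v. card (Wreach V E r Lb v)) ` V. a \<le> k"
      using cle card_mono[OF wfin sub2] le_trans by blast
  qed
  then show ?thesis using fLb nLb by blast
qed

end
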